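(* Let $m,n,p,q\in\mathbb{R}$ with $m<0$, and let $P(t)=t^5+mt^3+nt^2+pt+q$. Set $u=\frac{2\sqrt{-m}}{\sqrt5}$, $\alpha=\frac{16n}{u^3}$, $\beta=\frac{16p}{u^4}-5$, $\gamma=\frac{16q}{u^5}$, and $f(\theta)=\alpha\cos^2\theta+\beta\cos\theta+\cos 5\theta+\gamma$. Then the map $\theta\mapsto u\cos\theta$ restricts to a bijection from the set of zeros of $f$ in $[0,\pi]$ onto the set of roots of $P$ in $[-u,u]$. Explicitly, $\theta_0\in[0,\pi]$ satisfies $f(\theta_0)=0$ if and only if $t_0=u\cos\theta_0$ is a root of $P$. *)

theory Defs
  imports Complex_Main
begin

end

theory Submission
  imports Defs
begin

lemma cos5: "cos (5 * x) = 16 * cos x ^ 5 - 20 * cos x ^ 3 + 5 * cos (x::real)"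
proof -
  have e: "5 * x = 3 * x + 2 * x" by simp
  have s3: "sin (3 * x) = 3 * sin x - 4 * sin x ^ 3"
  proof -
    have "sin (3 * x) = sin (2*x + x)" by simp
    also have "\<dots> = 2 * sin x * cos x * cos x + (cos x ^ 2 - sin x ^ 2) * sin x"
      unfolding sin_add sin_double cos_double by simp
    also have "\<dots> = 3 * sin x - 4 * sin x ^ 3"
    proof -
      have c2: "cos x ^ 2 = 1 - sin x ^ 2" by (simp add: cos_squared_eq)
      have "2 * sin x * cos x * cos x + (cos x ^ 2 - sin x ^ 2) * sin x
          = sin x * (3 * cos x ^ 2 - sin x ^ 2)" by (simp add: algebra_simps power2_eq_square)
      also have "\<dots> = 3 * sin x - 4 * sin x ^ 3" unfolding c2
        by (simp add: algebra_simps power2_eq_square power3_eq_cube)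
      finally show ?thesis .
    qed
    finally show ?thesis .
  qed
  have ss: "sin x ^ 2 = 1 - cos x ^ 2" by (simp add: sin_squared_eq)
  have "cos (5 * x) = cos (3*x) * cos (2*x) - sin (3*x) * sin (2*x)"
    unfolding e cos_add by simp
  also have "\<dots> = (4 * cos x ^ 3 - 3 * cos x) * (2 * cos x ^ 2 - 1)
      - 2 * sin x ^ 2 * cos x * (3 - 4 * sin x ^ 2)"
    unfolding s3 cos_treble_cos cos_double_cos sin_double
    by (simp add: algebra_simps power2_eq_square power3_eq_cube)
  also have "\<dots> = 16 * cos x ^ 5 - 20 * cos x ^ 3 + 5 * cos x"
    unfolding ss by (simp add: algebra_simps power2_eq_square power3_eq_cube
        numeral_eq_Suc)
  finally show ?thesis .
qed

theorem corollary1: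
  fixes m n p q :: real
  assumes "m < 0"
  defines "P \<equiv> (\<lambda>t::real. t^5 + m * t^3 + n * t^2 + p * t + q)"
    and "u \<equiv> 2 * sqrt (- m) / sqrt 5"
  defines "\<alpha> \<equiv> 16 * n / u^3"
    and "\<beta> \<equiv> 16 * p / u^4 - 5"
    and "\<gamma> \<equiv> 16 * q / u^5"
  defines "f \<equiv> (\<lambda>\<theta>::real. \<alpha> * (cos \<theta>)^2 + \<beta> * cos \<theta> + cos (5 * \<theta>) + \<gamma>)"
  shows "bij_betw (\<lambda>\<theta>. u * cos \<theta>) {\<theta>\<in>{0..pi}. f \<theta> = 0} {t\<in>{-u..u}. P t = 0}
         \<and> (\<forall>\<theta>0\<in>{0..pi}. f \<theta>0 = 0 \<longleftrightarrow> P (u * cos \<theta>0) = 0)"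
proof -
  have up: "u > 0" unfolding u_def using assms(1) by simp
  have u2: "u^2 = -4 * m / 5" unfolding u_def using assms(1)
    by (simp add: power_divide power_mult_distrib)
  have mu: "m = -5 * u^2 / 4" using u2 by simp
  have key: "P (u * cos x) = u^5 / 16 * f x" for x
  proof -
    have "u^5/16 * f x = u^5/16 * (16 * n / u^3 * cos x ^ 2 + (16 * p / u^4 - 5) * cos x
        + (16 * cos x ^ 5 - 20 * cos x ^ 3 + 5 * cos x) + 16 * q / u^5)"
      unfolding f_def \<alpha>_def \<beta>_def \<gamma>_def cos5 by simp
    also have "\<dots> = u^5 * cos x ^ 5 - 5/4 * u^5 * cos x ^ 3 + n * u^2 * cos x ^ 2
        + p * u * cos x + q"
      using up by (simp add: field_simps power_eq_if)
    also have "\<dots> = P (u * cos x)"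
      unfolding P_def mu by (simp add: algebra_simps power_eq_if)
    finally show ?thesis by simp
  qed
  have iff: "f x = 0 \<longleftrightarrow> P (u * cos x) = 0" for x
  proof -
    have "u^5/16 \<noteq> 0" using up by simp
    have "P (u * cos x) = 0 \<longleftrightarrow> u^5/16 * f x = 0" unfolding key ..
    then show ?thesis using \<open>u^5/16 \<noteq> 0\<close> by simp
  qed
  have bij: "bij_betw (\<lambda>\<theta>. u * cos \<theta>) {\<theta>\<in>{0..pi}. f \<theta> = 0} {t\<in>{-u..u}. P t = 0}"
  proof (rule bij_betw_byWitness[where f' = "\<lambda>t. arccos (t / u)"])
    show "\<forall>a\<in>{\<theta> \<in> {0..pi}. f \<theta> = 0}. arccos (u * cos a / u) = a"
      using up by (auto simp: arccos_cos)
    show "\<forall>a'\<in>{t \<in> {- u..u}. P t = 0}. u * cos (arccos (a' / u)) = a'"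
      using up by (auto simp: cos_arccos divide_simps)
    show "(\<lambda>\<theta>. u * cos \<theta>) ` {\<theta> \<in> {0..pi}. f \<theta> = 0} \<subseteq> {t \<in> {- u..u}. P t = 0}"
    proof -
      have b: "\<bar>u * cos x\<bar> \<le> u" for x
        using up abs_cos_le_one[of x] by (simp add: abs_mult mult_left_le)
      have "-u \<le> u * cos x \<and> u * cos x \<le> u" for x using b[of x] by linarith
      then show ?thesis using iff by auto
    qed
    show "(\<lambda>t. arccos (t / u)) ` {t \<in> {- u..u}. P t = 0} \<subseteq> {\<theta> \<in> {0..pi}. f \<theta> = 0}"
    proof (rule image_subsetI)
      fix t assume "t \<in> {t \<in> {- u..u}. P t = 0}"
      then have t: "t \<in> {-u..u}" "P t = 0" by auto
      have c: "cos (arccos (t/u)) = t/u" using t up by (auto simp: cos_arccos divide_simps)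
      have "-1 \<le> t/u" "t/u \<le> 1" using t up by (auto simp: divide_simps)
      then have "0 \<le> arccos (t/u)" "arccos (t/u) \<le> pi" using arccos by blast+
      moreover have "f (arccos (t/u)) = 0" using iff c t up by simp
      ultimately show "arccos (t/u) \<in> {\<theta> \<in> {0..pi}. f \<theta> = 0}" by simp
    qed
  qed
  show ?thesis using bij iff by blast
qed

end
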